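(* Let $G$, $k\ge 3$, the choice strings $c_{i,j}$ ($1\le i<j\le k$), the $\binom{k}{2}-(k-1)$ template strings, $L$ and $d$ be as in the Consensus Patterns construction in the context. If $G$ has a clique of size $k$, then the constructed Consensus Patterns instance has a solution: there is a string $s\in\{0,1\}^L$ and, for each choice string and each template string, a substring of it of length $L$, such that the sum over all these strings of the Hamming distances between $s$ and the chosen substrings is at most $d$.
   Context: Let $G=(V,E)$ be an undirected simple graph with $V=\{v_1,\dots,v_n\}$ and edge set $E=\{e_1,\dots,e_m\}$, and let $k\ge 3$ be an integer. All strings are over $\{0,1\}$. For $1\le p\le n$ let $\mathrm{number}(p)=0^{p-1}10^{n-p}$. Let $\mathrm{front\_tag}=(1^{nk^3}0)^{nk^3}0^{nk^3}$ (length $n^2k^6+2nk^3$). For $1\le i<j\le k$ and an edge $e$ joining $v_r,v_s$ with $r<s$ let $\mathrm{encode}(i,j,e)=(0^n)^{i-1}\,\mathrm{number}(r)\,(0^n)^{j-i-1}\,\mathrm{number}(s)\,(0^n)^{k-j}$ and $\mathrm{block}(i,j,e)=\mathrm{front\_tag}\,\mathrm{encode}(i,j,e)$. The choice string is $c_{i,j}=\mathrm{block}(i,j,e_1)\cdots\mathrm{block}(i,j,e_m)$. There are $\binom{k}{2}-(k-1)$ template strings, each equal to $\mathrm{front\_tag}\,1^{nk}$. Set $L=n^2k^6+2nk^3+nk$ and $d=(\binom{k}{2}-(k-1))nk$. The Consensus Patterns instance consists of all choice strings and all template strings with these $L$ and $d$. Consensus Patterns asks for a string $s$ of length $L$ and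 a length-$L$ substring of each input string such that the sum of Hamming distances from $s$ to these substrings is at most $d$. *)

theory Defs
  imports Main
begin

text \<open>Binary strings are represented as bool lists (False = 0, True = 1).
 The graph has vertices 1..n; the edge list E = [e_1,...,e_m] lists each edge
 as a pair (r,s) with r < s.\<close>

definition hamming :: "bool list \<Rightarrow> bool list \<Rightarrow> nat" where
  "hamming xs ys = length (filter (\<lambda>(a,b). a \<noteq> b) (zip xs ys))"

definition number :: "nat \<Rightarrow> nat \<Rightarrow> bool list" where
  "number n p = replicate (p - 1) False @ [True] @ replicate (n - p) False"

definition front_tag :: "nat \<Rightarrow> nat \<Rightarrow> bool list" where
  "front_tag n k = concat (replicate (n * k^3) (replicate (n * k^3) True @ [False]))
                   @ replicate (n * k^3) False"

definition zeros :: "nat \<Rightarrow> nat \<Rightarrow> bool list" where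
  "zeros n t = replicate (t * n) False"

definition encode :: "nat \<Rightarrow> nat \<Rightarrow> nat \<Rightarrow> nat \<Rightarrow> nat \<times> nat \<Rightarrow> bool list" where
  "encode n k i j e = (case e of (r, s) \<Rightarrow>
     zeros n (i - 1) @ number n r @ zeros n (j - i - 1) @ number n s @ zeros n (k - j))"

definition block :: "nat \<Rightarrow> nat \<Rightarrow> nat \<Rightarrow> nat \<Rightarrow> nat \<times> nat \<Rightarrow> bool list" where
  "block n k i j e = front_tag n k @ encode n k i j e"

definition choice_string :: "nat \<Rightarrow> nat \<Rightarrow> (nat \<times> nat) list \<Rightarrow> nat \<Rightarrow> nat \<Rightarrow> bool list" where
  "choice_string n k E i j = concat (map (block n k i j) E)"

definition template_string :: "nat \<Rightarrow> nat \<Rightarrow> bool list" where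
  "template_string n k = front_tag n k @ replicate (n * k) True"

definition num_templates :: "nat \<Rightarrow> nat" where
  "num_templates k = (k choose 2) - (k - 1)"

definition cp_strings :: "nat \<Rightarrow> nat \<Rightarrow> (nat \<times> nat) list \<Rightarrow> bool list list" where
  "cp_strings n k E =
     [choice_string n k E i j. i \<leftarrow> [1..<k+1], j \<leftarrow> [i+1..<k+1]]
     @ replicate (num_templates k) (template_string n k)"

definition cp_L :: "nat \<Rightarrow> nat \<Rightarrow> nat" where
  "cp_L n k = n^2 * k^6 + 2 * n * k^3 + n * k"

definition cp_d :: "nat \<Rightarrow> nat \<Rightarrow> nat" where
  "cp_d n k = num_templates k * n * k"

definition consensus_patterns_solvable :: "bool list list \<Rightarrow> nat \<Rightarrow> nat \<Rightarrow> bool" where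
  "consensus_patterns_solvable strs L d \<longleftrightarrow>
     (\<exists>s pos. length s = L \<and>
        (\<forall>t < length strs. pos t + L \<le> length (strs ! t)) \<and>
        (\<Sum>t < length strs. hamming s (take L (drop (pos t) (strs ! t)))) \<le> d)"

definition simple_graph :: "nat \<Rightarrow> (nat \<times> nat) list \<Rightarrow> bool" where
  "simple_graph n E \<longleftrightarrow> distinct E \<and> (\<forall>(r,s) \<in> set E. 1 \<le> r \<and> r < s \<and> s \<le> n)"

definition adjacent :: "(nat \<times> nat) list \<Rightarrow> nat \<Rightarrow> nat \<Rightarrow> bool" where
  "adjacent E u v \<longleftrightarrow> (u, v) \<in> set E \<or> (v, u) \<in> set E"

definition has_clique :: "nat \<Rightarrow> (nat \<times> nat) list \<Rightarrow> nat \<Rightarrow> bool" where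
  "has_clique n E k \<longleftrightarrow> (\<exists>K. K \<subseteq> {1..n} \<and> card K = k \<and>
      (\<forall>u \<in> K. \<forall>v \<in> K. u \<noteq> v \<longrightarrow> adjacent E u v))"

end

theory Submission
  imports Defs
begin

lemma ham_append: "length a = length c \<Longrightarrow> hamming (a @ b) (c @ d) = hamming a c + hamming b d"
  by (simp add: hamming_def)

lemma ham_self: "hamming a a = 0"
  by (induction a) (auto simp: hamming_def)

lemma ham_rep: "hamming xs (replicate (length xs) b) = length (filter (\<lambda>x. x \<noteq> b) xs)"
  by (induction xs) (auto simp: hamming_def)

lemma ham_concat:
  "(\<forall>l\<in>set ls. length (f l) = length (g l)) \<Longrightarrow>
   hamming (concat (map f ls)) (concat (map g ls)) = (\<Sum>l\<leftarrow>ls. hamming (f l) (g l))"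
  by (induction ls) (auto simp: ham_append hamming_def)

lemma len_number: "1 \<le> p \<Longrightarrow> p \<le> n \<Longrightarrow> length (number n p) = n"
  by (simp add: number_def)

lemma ham_number0: "1 \<le> p \<Longrightarrow> p \<le> n \<Longrightarrow> hamming (number n p) (replicate n False) = 1"
  using ham_rep[of "number n p" False] by (simp add: len_number) (simp add: number_def)

lemma ham_number1: "1 \<le> p \<Longrightarrow> p \<le> n \<Longrightarrow> hamming (number n p) (replicate n True) = n - 1"
  using ham_rep[of "number n p" True] by (simp add: len_number) (simp add: number_def)

lemma concat_rep: "concat (replicate t (replicate n x)) = replicate (t * n) x"
  by (induction t) (auto simp: replicate_add)

lemma take_drop_concat:
  "(\<forall>x\<in>set xs. length x = L) \<Longrightarrow> m < length xs \<Longrightarrow> take L (drop (m * L) (concat xs)) = xs ! m"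
proof (induction xs arbitrary: m)
  case Nil then show ?case by simp
next
  case (Cons a xs)
  show ?case
  proof (cases m)
    case 0 then show ?thesis using Cons by simp
  next
    case (Suc m')
    have "drop (m * L) (concat (a # xs)) = drop (m' * L) (concat xs)"
      using Cons Suc by (simp add: add.commute)
    then show ?thesis using Cons Suc by simp
  qed
qed

lemma length_concat_const: "(\<forall>x\<in>set xs. length x = L) \<Longrightarrow> length (concat xs) = length xs * L"
  by (induction xs) auto

lemma map_const_seg: "(\<forall>l\<in>set ls. F l = c) \<Longrightarrow> map F ls = replicate (length ls) c"
  by (induction ls) auto

lemma encode_eq:
  assumes "1 \<le> i" "i < j" "j \<le> k"
  shows "encode n k i j (a, b) = concat (map (\<lambda>l. if l = i then number n a else if l = j then number n b
          else replicate n False) [1..<k+1])"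
proof -
  define F where "F = (\<lambda>l. if l = i then number n a else if l = j then number n b
          else replicate n False)"
  have u: "[1..<k+1] = [1..<i] @ [i] @ [i+1..<j] @ [j] @ [j+1..<k+1]"
  proof -
    have "[1..<k+1] = [1..<i] @ [i..<k+1]" using assms upt_add_eq_append[of 1 i "k+1-i"] by simp
    moreover have "[i..<k+1] = [i] @ [i+1..<k+1]" using assms upt_conv_Cons by simp
    moreover have "[i+1..<k+1] = [i+1..<j] @ [j..<k+1]" using assms upt_add_eq_append[of "i+1" j "k+1-j"] by simp
    moreover have "[j..<k+1] = [j] @ [j+1..<k+1]" using assms upt_conv_Cons by simp
    ultimately show ?thesis by simp
  qed
  have s1: "concat (map F [1..<i]) = zeros n (i - 1)"
    using map_const_seg[of "[1..<i]" F "replicate n False"] assms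
    by (simp add: F_def zeros_def concat_rep del: upt_Suc)
  have s2: "concat (map F [i+1..<j]) = zeros n (j - i - 1)"
    using map_const_seg[of "[i+1..<j]" F "replicate n False"] assms
    by (simp add: F_def zeros_def concat_rep del: upt_Suc)
  have s3: "concat (map F [j+1..<k+1]) = zeros n (k - j)"
    using map_const_seg[of "[j+1..<k+1]" F "replicate n False"] assms
    by (simp add: F_def zeros_def concat_rep del: upt_Suc)
  have "concat (map F [1..<k+1]) = encode n k i j (a, b)"
    unfolding u using s1 s2 s3 assms by (simp add: F_def encode_def)
  then show ?thesis by (simp add: F_def)
qed

lemma sum_tri: "(\<Sum>i\<in>{1..<k+1}. k - i) = k choose 2"
proof (induction k)
  case 0 then show ?case by simp
next
  case (Suc k)
  have "(\<Sum>i\<in>{1..<Suc k+1}. Suc k - i) = (\<Sum>i\<in>{1..<k+1}. Suc k - i) + 0"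
    by (simp add: sum.atLeastLessThan_Suc)
  also have "\<dots> = (\<Sum>i\<in>{1..<k+1}. (k - i) + 1)"
    by (auto intro!: sum.cong simp: Suc_diff_le)
  also have "\<dots> = (\<Sum>i\<in>{1..<k+1}. k - i) + (\<Sum>i\<in>{1..<k+1}. 1)"
    by (rule sum.distrib)
  also have "\<dots> = (k choose 2) + k" using Suc by (simp only:) simp
  also have "\<dots> = Suc k choose 2"
    by (simp add: numeral_2_eq_2)
  finally show ?case .
qed

lemma length_pairs: "length [(i,j). i \<leftarrow> [1..<k+1], j \<leftarrow> [i+1..<k+1]] = k choose 2"
proof -
  have "length [(i,j). i \<leftarrow> [1..<k+1], j \<leftarrow> [i+1..<k+1]] = (\<Sum>i\<leftarrow>[1..<k+1]. k - i)"
    by (simp add: length_concat comp_def del: upt_Suc)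
  also have "\<dots> = (\<Sum>i\<in>{1..<k+1}. k - i)"
    by (simp add: interv_sum_list_conv_sum_set_nat)
  finally show ?thesis using sum_tri by simp
qed

lemma sum_split: "(\<Sum>t<(a::nat)+b. f t) = (\<Sum>t<a. f t) + (\<Sum>t<b. f (a + t)::nat)"
  by (induction b) auto


lemma two_choose: "2 * (k choose 2) = k * (k - 1)"
proof (induction k)
  case 0 then show ?case by simp
next
  case (Suc k)
  have "Suc k choose 2 = k + (k choose 2)" by (simp add: numeral_2_eq_2)
  then show ?case using Suc by (cases k) (auto simp: algebra_simps)
qed

lemma final_arith:
  fixes C T k n :: nat
  assumes "2 * C = k * (k - 1)" "T = C - (k - 1)" "k \<ge> 3" "n \<ge> 1"
  shows "C * (k - 2) + T * (k * (n - 1)) \<le> T * n * k"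
proof -
  obtain m where m: "k = m + 3" using assms(3) by (metis add.commute le_Suc_ex)
  obtain n' where n': "n = n' + 1" using assms(4) by (metis add.commute le_Suc_ex)
  have c: "2 * C = (m+3)*(m+2)" using assms(1) m by simp
  have "C \<ge> m + 2" using c by (simp add: algebra_simps) 
  then have t: "2 * T = (m+1)*(m+2)" using assms(2) m c by (simp add: algebra_simps)
  have "2 * (C * (k - 2)) = (2 * C) * (m + 1)" using m by simp
  also have "\<dots> = (m+3)*(m+2)*(m+1)" using c by simp
  also have "\<dots> = (2 * T) * (m + 3)" using t by (simp add: algebra_simps)
  also have "\<dots> = 2 * (T * k)" using m by simp
  finally have "2 * (C * (k - 2)) = 2 * (T * k)" .
  then have e: "C * (k - 2) = T * k" by simp
  have "T * n * k = T * k * n' + T * k" using n' by (simp add: algebra_simps)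
  then show ?thesis using e n' by (simp add: algebra_simps)
qed

lemma front_len: "length (front_tag n k) = n^2 * k^6 + 2 * n * k^3"
proof -
  have "length (front_tag n k) = (n * k^3) * (n * k^3 + 1) + n * k^3"
    unfolding front_tag_def by (simp add: length_concat_const[where L="n * k^3 + 1"])
  also have "\<dots> = n^2 * k^6 + 2 * n * k^3"
    by (simp add: algebra_simps power2_eq_square flip: power_add)
  finally show ?thesis .
qed

theorem proposition5:
  fixes n k :: nat and E :: "(nat \<times> nat) list"
  assumes "simple_graph n E"
    and "k \<ge> 3"
    and "has_clique n E k"
  shows "consensus_patterns_solvable (cp_strings n k E) (cp_L n k) (cp_d n k)"
proof -
  obtain K where K: "K \<subseteq> {1..n}" "card K = k" "\<forall>u\<in>K. \<forall>v\<in>K. u \<noteq> v \<longrightarrow> adjacent E u v"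
    using assms(3) unfolding has_clique_def by blast
  have finK: "finite K" using K(1) finite_subset by blast
  define xs where "xs = sorted_list_of_set K"
  have xs_len: "length xs = k" using K(2) finK by (simp add: xs_def)
  have xs_sorted: "sorted_wrt (<) xs" by (simp add: xs_def)
  have xs_set: "set xs = K" using finK by (simp add: xs_def)
  define u where "u l = xs ! (l - 1)" for l
  have uK: "u l \<in> K" if "1 \<le> l" "l \<le> k" for l
    using that xs_len xs_set nth_mem[of "l - 1" xs] unfolding u_def by auto
  have ur: "1 \<le> u l \<and> u l \<le> n" if "1 \<le> l" "l \<le> k" for l
    using uK[OF that] K(1) by auto
  have um: "u i < u j" if "1 \<le> i" "i < j" "j \<le> k" for i j
    using sorted_wrt_nth_less[OF xs_sorted, of "i - 1" "j - 1"] that xs_len unfolding u_def by auto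
  have uE: "(u i, u j) \<in> set E" if "1 \<le> i" "i < j" "j \<le> k" for i j
  proof -
    have "adjacent E (u i) (u j)" using K(3) uK[of i] uK[of j] um[OF that] that by auto
    moreover have "(u j, u i) \<notin> set E" using assms(1) um[OF that] unfolding simple_graph_def by auto
    ultimately show ?thesis unfolding adjacent_def by auto
  qed
  have ur1: "1 \<le> u l" and ur2: "u l \<le> n" if "1 \<le> l" "l \<le> k" for l using ur[OF that] by auto
  have numlen: "length (number n (u l)) = n" if "1 \<le> l" "l \<le> k" for l
    using ur[OF that] by (simp add: len_number)
  have ham0: "hamming (number n (u l)) (replicate n False) = Suc 0" if "1 \<le> l" "l \<le> k" for l
    using ur[OF that] by (simp add: ham_number0)
  have ham1: "hamming (number n (u l)) (replicate n True) = n - Suc 0" if "1 \<le> l" "l \<le> k" for l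
    using ur[OF that] by (simp add: ham_number1)
  have n1: "n \<ge> 1" using ur[of 1] assms(2) by auto
  define tail where "tail = concat (map (\<lambda>l. number n (u l)) [1..<k+1])"
  have tail_len: "length tail = k * n"
    unfolding tail_def by (subst length_concat_const[where L=n]) (auto intro!: numlen simp del: upt_Suc)
  define s where "s = front_tag n k @ tail"
  define Lc where "Lc = cp_L n k"
  have Lc: "Lc = length (front_tag n k) + k * n" by (simp add: Lc_def cp_L_def front_len)
  have s_len: "length s = Lc" by (simp add: s_def Lc tail_len)
  define P where "P = [(i,j). i \<leftarrow> [1..<k+1], j \<leftarrow> [i+1..<k+1]]"
  have Pmem: "1 \<le> i \<and> i < j \<and> j \<le> k" if "(i,j) \<in> set P" for i j
    using that unfolding P_def by auto
  define T where "T = num_templates k"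
  have strs: "cp_strings n k E = map (\<lambda>(i,j). choice_string n k E i j) P @ replicate T (template_string n k)"
    unfolding cp_strings_def P_def T_def by (simp add: map_concat comp_def)
  have ar: "(x - Suc 0) * n + n = x * n" if "x \<ge> 1" for x using that by (cases x) auto
  have enc_len: "length (encode n k i j e) = k * n" if "(i,j) \<in> set P" "e \<in> set E" for i j e
  proof -
    obtain a b where e: "e = (a,b)" by fastforce
    have ab: "1 \<le> a" "a \<le> n" "1 \<le> b" "b \<le> n" using assms(1) that(2) e unfolding simple_graph_def by auto
    note ij = Pmem[OF that(1)]
    have la: "length (number n a) = n" "length (number n b) = n" using ab len_number by auto
    show ?thesis unfolding e encode_eq[OF ij[THEN conjunct1] ij[THEN conjunct2, THEN conjunct1] ij[THEN conjunct2, THEN conjunct2]]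
      by (subst length_concat_const[where L=n]) (auto simp: la simp del: upt_Suc)
  qed
  have blen: "length (block n k i j e) = Lc" if "(i,j) \<in> set P" "e \<in> set E" for i j e
    using enc_len[OF that] by (simp add: block_def Lc)
  define idx where "idx i j = (SOME m. m < length E \<and> E ! m = (u i, u j))" for i j
  have idx: "idx i j < length E \<and> E ! idx i j = (u i, u j)" if "(i,j) \<in> set P" for i j
  proof -
    have "\<exists>m. m < length E \<and> E ! m = (u i, u j)"
      using uE[of i j] Pmem[OF that] by (auto simp: in_set_conv_nth)
    then show ?thesis unfolding idx_def by (rule someI_ex)
  qed
  define pos where "pos t = (if t < length P then idx (fst (P!t)) (snd (P!t)) * Lc else 0)" for t
  have ch_take: "take Lc (drop (idx i j * Lc) (choice_string n k E i j)) = block n k i j (u i, u j)"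
    if "(i,j) \<in> set P" for i j
    unfolding choice_string_def using idx[OF that] blen[OF that]
    by (subst take_drop_concat[where L=Lc]) auto
  have ch_len: "length (choice_string n k E i j) = length E * Lc" if "(i,j) \<in> set P" for i j
    unfolding choice_string_def using blen[OF that]
    by (subst length_concat_const[where L=Lc]) auto
  have ch_ham: "hamming s (block n k i j (u i, u j)) = k - 2" if "(i,j) \<in> set P" for i j
  proof -
    note ij = Pmem[OF that]
    have "hamming s (block n k i j (u i, u j)) = hamming tail (encode n k i j (u i, u j))"
      unfolding s_def block_def by (simp add: ham_append ham_self)
    also have "\<dots> = (\<Sum>l\<leftarrow>[1..<k+1]. hamming (number n (u l))
        (if l = i then number n (u i) else if l = j then number n (u j) else replicate n False))"
      unfolding tail_def using ij by (subst encode_eq) (auto intro!: ham_concat numlen simp: len_number simp del: upt_Suc)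
    also have "\<dots> = (\<Sum>l\<leftarrow>[1..<k+1]. (if l = i \<or> l = j then 0 else 1))"
      by (intro arg_cong[where f=sum_list] map_cong) (auto simp: ham_self intro!: ham0 simp del: upt_Suc)
    also have "\<dots> = (\<Sum>l\<in>{1..<k+1}. (if l \<in> {i,j} then 0 else 1))"
      by (simp add: interv_sum_list_conv_sum_set_nat del: upt_Suc)
    also have "\<dots> = card ({1..<k+1} - {i,j})"
    proof -
      have e: "{x. x = i \<or> x = j} = {i, j}" by auto
      show ?thesis by (subst sum.If_cases) (simp_all add: Diff_eq e del: atLeastLessThanSuc)
    qed
    also have "\<dots> = k - 2"
      using ij by (subst card_Diff_subset) auto
    finally show ?thesis .
  qed
  have tm_len: "length (template_string n k) = Lc" by (simp add: template_string_def Lc mult.commute)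
  have tm_ham: "hamming s (template_string n k) = k * (n - 1)"
  proof -
    have r: "replicate (n * k) True = concat (map (\<lambda>l. replicate n True) [1..<k+1])"
      using map_const_seg[of "[1..<k+1]" "\<lambda>l. replicate n True" "replicate n True"]
      by (simp add: concat_rep mult.commute del: upt_Suc)
    have "hamming s (template_string n k) = hamming tail (replicate (n * k) True)"
      unfolding s_def template_string_def by (simp add: ham_append ham_self)
    also have "\<dots> = (\<Sum>l\<leftarrow>[1..<k+1]. hamming (number n (u l)) (replicate n True))"
      unfolding tail_def r by (rule ham_concat) (auto intro!: numlen simp del: upt_Suc)
    also have "\<dots> = (\<Sum>l\<leftarrow>[1..<k+1]. n - 1)"
      by (intro arg_cong[where f=sum_list] map_cong) (auto intro!: ham1 simp del: upt_Suc)
    also have "\<dots> = k * (n - 1)"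
      using map_const_seg[of "[1..<k+1]" "\<lambda>l. n - 1" "n - 1"]
      by (simp add: sum_list_replicate del: upt_Suc)
    finally show ?thesis .
  qed
  let ?strs = "cp_strings n k E"
  have lstrs: "length ?strs = length P + T" by (simp add: strs)
  have nth1: "?strs ! t = choice_string n k E (fst (P!t)) (snd (P!t))" if "t < length P" for t
    using that by (simp add: strs nth_append case_prod_beta)
  have nth2: "?strs ! (length P + t) = template_string n k" if "t < T" for t
    using that by (simp add: strs nth_append)
  have Pt: "(fst (P!t), snd (P!t)) \<in> set P" if "t < length P" for t
    using that by simp
  have posok: "\<forall>t < length ?strs. pos t + Lc \<le> length (?strs ! t)"
  proof (intro allI impI)
    fix t assume t: "t < length ?strs"
    show "pos t + Lc \<le> length (?strs ! t)"
    proof (cases "t < length P")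
      case True
      have "idx (fst (P!t)) (snd (P!t)) < length E" using idx[OF Pt[OF True]] by blast
      then have "idx (fst (P!t)) (snd (P!t)) * Lc + Lc \<le> length E * Lc"
        using mult_le_mono1[of "Suc (idx (fst (P!t)) (snd (P!t)))" "length E" Lc] by simp
      then show ?thesis using True nth1 ch_len[OF Pt[OF True]] by (simp add: pos_def)
    next
      case False
      then obtain t' where t': "t = length P + t'" "t' < T" using t lstrs
        by (intro that[of "t - length P"]) auto
      then show ?thesis using nth2 tm_len False by (simp add: pos_def)
    qed
  qed
  have sum1: "(\<Sum>t<length P. hamming s (take Lc (drop (pos t) (?strs ! t)))) = (\<Sum>t<length P. k - 2)"
  proof (rule sum.cong)
    fix t assume "t \<in> {..<length P}"
    then have t: "t < length P" by simp
    show "hamming s (take Lc (drop (pos t) (?strs ! t))) = k - 2"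
      using t nth1[OF t] ch_take[OF Pt[OF t]] ch_ham[OF Pt[OF t]] by (simp add: pos_def)
  qed simp
  have sum2: "(\<Sum>t<T. hamming s (take Lc (drop (pos (length P + t)) (?strs ! (length P + t))))) = (\<Sum>t<T. k * (n - 1))"
  proof (rule sum.cong)
    fix t assume "t \<in> {..<T}"
    then have t: "t < T" by simp
    show "hamming s (take Lc (drop (pos (length P + t)) (?strs ! (length P + t)))) = k * (n - 1)"
      using t nth2[OF t] tm_ham tm_len by (simp add: pos_def)
  qed simp
  have lenP: "length P = k choose 2" unfolding P_def by (rule length_pairs)
  have "(\<Sum>t<length ?strs. hamming s (take Lc (drop (pos t) (?strs ! t))))
      = (k choose 2) * (k - 2) + T * (k * (n - 1))"
    unfolding lstrs sum_split sum1 sum2 by (simp add: lenP)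
  also have "\<dots> \<le> T * n * k"
    by (rule final_arith[OF two_choose _ assms(2) n1]) (simp add: T_def num_templates_def)
  also have "\<dots> = cp_d n k" by (simp add: T_def cp_d_def)
  finally show ?thesis unfolding consensus_patterns_solvable_def Lc_def[symmetric]
    using s_len posok by blast
qed

end
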